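(* Assume Assumptions A and B, where the intervention targets $i_1,\dots,i_K$ need not be distinct. Fix the DAG $\mathcal G$, the targets, and $H$. Then for all choices of the parameters (the diagonal and edge entries of $B_0$, and $\lambda_1,\dots,\lambda_K$) outside a Lebesgue-measure-zero subset of the parameter space, the following holds: for all distinct $k,\ell\in[K]$, $\mathrm{rank}(\Theta_k-\Theta_\ell)=1$ if and only if $i_k=i_\ell$.
   Context: Notation: $[d]=\{1,\dots,d\}$, $\mathbf e_i$ standard basis vectors, $M^\dagger$ the Moore–Penrose pseudoinverse. Assumption A (model). $\mathcal G$ is a DAG on $[d]$ whose nodes are ordered so that every edge $j\to i$ has $j>i$; a source node has no parents. Contexts $k\in\{0\}\cup[K]$. For each $k$, $A_k\in\mathbb R^{d\times d}$ has zero diagonal and $(A_k)_{ij}=0$ unless $j\to i$ is an edge of $\mathcal G$, and $(A_0)_{ij}\neq 0$ iff $j\to i$ is an edge; $\Omega_k$ is diagonal with positive diagonal; $B_k:=\Omega_k^{-1/2}(I_d-A_k)$ (so $B_0$ is upper triangular with positive diagonal and nonzero off-diagonal entries exactly at positions $(i,j)$ with $j\to i$ an edge). In context $k$, $Z=B_k^{-1}\varepsilon$ with $\mathrm{Cov}(\varepsilon)=I_d$. For each $k\in[K]$ there exist $i_k\in[d]$ and $\mathbf c_k\in\mathbb R^d$ with $B_k=B_0+\mathbf e_{i_k}\mathbf c_k^\top$, and $B_k^\top\mathbf e_{i_k}$ is not a scalar multiple of $B_0^\top\mathbf e_{i_k}$ unless $i_k$ is a source. $G\in\mathbb R^{p\times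 d}$ ($p\ge d$) has rank $d$, $X=GZ$ in every context, $H:=G^\dagger$, normalized so that in each row of $H$ the maximum absolute value of the entries is $1$ and the leftmost entry of absolute value $1$ equals $1$. The precision matrices are $\Theta_k=H^\top B_k^\top B_kH$. Assumption B (perfect interventions). For each $k\in[K]$, $\mathbf c_k=\lambda_k\mathbf e_{i_k}-B_0^\top\mathbf e_{i_k}$ for some $\lambda_k>0$. *)

theory Defs
  imports "HOL-Analysis.Analysis"
begin

datatype 'd param = Diag 'd | Edge 'd 'd | Lam nat

text \<open>Index set of the parameter space. A pair (j,i) in E encodes the edge j -> i;
  the corresponding entry of B_0 is at position (i,j).\<close>
definition param_index :: "('d \<times> 'd) set \<Rightarrow> nat \<Rightarrow> 'd param set" where
  "param_index E K = range Diag \<union> (\<lambda>(j,i). Edge i j) ` E \<union> Lam ` {1..K}"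

definition param_measure :: "('d \<times> 'd) set \<Rightarrow> nat \<Rightarrow> ('d param \<Rightarrow> real) measure" where
  "param_measure E K = Pi\<^sub>M (param_index E K) (\<lambda>_. lborel)"

definition admissible :: "('d \<times> 'd) set \<Rightarrow> nat \<Rightarrow> ('d param \<Rightarrow> real) \<Rightarrow> bool" where
  "admissible E K \<theta> \<longleftrightarrow>
     (\<forall>i. \<theta> (Diag i) > 0) \<and> (\<forall>(j,i)\<in>E. \<theta> (Edge i j) \<noteq> 0) \<and> (\<forall>k\<in>{1..K}. \<theta> (Lam k) > 0)"

definition B0 :: "('d::finite \<times> 'd) set \<Rightarrow> ('d param \<Rightarrow> real) \<Rightarrow> real^'d^'d" where
  "B0 E \<theta> = (\<chi> i j. if i = j then \<theta> (Diag i) else if (j,i) \<in> E then \<theta> (Edge i j) else 0)"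

text \<open>B_k = B_0 + e_{i_k} c_k^T with c_k = lambda_k e_{i_k} - B_0^T e_{i_k} (Assumption B).\<close>
definition Bk :: "('d::finite \<times> 'd) set \<Rightarrow> (nat \<Rightarrow> 'd) \<Rightarrow> ('d param \<Rightarrow> real) \<Rightarrow> nat \<Rightarrow> real^'d^'d" where
  "Bk E tgt \<theta> k =
     (let c = \<theta> (Lam k) *\<^sub>R axis (tgt k) 1 - transpose (B0 E \<theta>) *v axis (tgt k) 1
      in \<chi> i j. B0 E \<theta> $ i $ j + (if i = tgt k then c $ j else 0))"

definition Theta :: "('d::finite \<times> 'd) set \<Rightarrow> (nat \<Rightarrow> 'd) \<Rightarrow> real^'p^'d \<Rightarrow> ('d param \<Rightarrow> real) \<Rightarrow> nat \<Rightarrow> real^'p^'p" where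
  "Theta E tgt H \<theta> k = transpose H ** transpose (Bk E tgt \<theta> k) ** Bk E tgt \<theta> k ** H"

definition normalized_rows :: "real^'p::{finite,linorder}^'d \<Rightarrow> bool" where
  "normalized_rows H \<longleftrightarrow> (\<forall>r. (\<forall>c. \<bar>H $ r $ c\<bar> \<le> 1) \<and> (\<exists>c. \<bar>H $ r $ c\<bar> = 1) \<and>
      (\<forall>c. \<bar>H $ r $ c\<bar> = 1 \<and> (\<forall>c'<c. \<bar>H $ r $ c'\<bar> \<noteq> 1) \<longrightarrow> H $ r $ c = 1))"

end

theory Submission
  imports Defs
begin


lemma Bk_entry:
  "Bk E tgt \<theta> k $ r $ a = (if r = tgt k then (if a = tgt k then \<theta> (Lam k) else 0) else B0 E \<theta> $ r $ a)"
  by (simp add: Bk_def Let_def axis_def transpose_def matrix_vector_mult_def if_distrib cong: if_cong)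

lemma BTB_entry:
  fixes B :: "real^'d::finite^'d"
  shows "(transpose B ** B) $ a $ b = (\<Sum>r\<in>UNIV. B $ r $ a * B $ r $ b)"
  by (simp add: matrix_matrix_mult_def transpose_def)

lemma BkTBk_entry:
  "(transpose (Bk E tgt \<theta> k) ** Bk E tgt \<theta> k) $ a $ b =
     (transpose (B0 E \<theta>) ** B0 E \<theta>) $ a $ b - B0 E \<theta> $ tgt k $ a * B0 E \<theta> $ tgt k $ b
     + (if a = tgt k \<and> b = tgt k then (\<theta> (Lam k))\<^sup>2 else 0)"
proof -
  let ?i = "tgt k"
  let ?f = "\<lambda>r. Bk E tgt \<theta> k $ r $ a * Bk E tgt \<theta> k $ r $ b"
  let ?g = "\<lambda>r. B0 E \<theta> $ r $ a * B0 E \<theta> $ r $ b"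
  have "sum ?f UNIV = ?f ?i + sum ?f (UNIV - {?i})"
    by (simp add: sum.remove)
  moreover have "sum ?g UNIV = ?g ?i + sum ?g (UNIV - {?i})"
    by (simp add: sum.remove)
  moreover have "sum ?f (UNIV - {?i}) = sum ?g (UNIV - {?i})"
    by (rule sum.cong) (auto simp: Bk_entry)
  ultimately show ?thesis
    by (simp add: BTB_entry Bk_entry power2_eq_square)
qed

lemma rank_sandwich:
  fixes H :: "real^'p^'d" and M :: "real^'d^'d"
  assumes "rank H = CARD('d)"
  shows "rank (transpose H ** M ** H) = rank M"
proof -
  obtain R :: "real^'d^'p" where R: "H ** R = mat 1"
    using assms full_rank_surjective matrix_right_invertible_surjective by blast
  have RT: "transpose R ** transpose H = mat 1"
    by (metis R matrix_transpose_mul transpose_mat)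
  have "M = transpose R ** (transpose H ** M ** H) ** R"
  proof -
    have "transpose R ** (transpose H ** M ** H) ** R = (transpose R ** transpose H) ** M ** (H ** R)"
      by (simp add: matrix_mul_assoc)
    then show ?thesis by (simp add: R RT)
  qed
  then have "rank M \<le> rank (transpose H ** M ** H)"
    by (metis rank_mul_le_left rank_mul_le_right order_trans)
  moreover have "rank (transpose H ** M ** H) \<le> rank M"
    by (metis rank_mul_le_left rank_mul_le_right order_trans)
  ultimately show ?thesis by simp
qed

lemma rank1_minor:
  fixes A :: "real^'n^'m"
  assumes "rank A = 1"
  shows "A $ a $ a' * A $ b $ b' - A $ a $ b' * A $ b $ a' = 0"
proof -
  obtain B where B: "B \<subseteq> range (\<lambda>x. A *v x)" "independent B" "range (\<lambda>x. A *v x) \<subseteq> span B"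
    "card B = 1"
    using basis_exists[of "range (\<lambda>x. A *v x)"] assms rank_dim_range by metis
  then obtain v where v: "B = {v}" by (metis card_1_singletonE)
  have "\<exists>s. A *v axis c 1 = s *\<^sub>R v" for c
    using B(3) v span_singleton[of v] by (auto simp: scaleR_conv_of_real)
  then obtain s where s: "\<And>c. A *v axis c 1 = s c *\<^sub>R v" by metis
  have e: "A $ r $ c = s c * v $ r" for r c
    using arg_cong[OF s[of c], of "\<lambda>w. w $ r"] by (simp add: matrix_vector_mult_basis column_def)
  show ?thesis by (simp add: e)
qed

lemma rank_single:
  fixes M :: "real^'n^'n"
  assumes "\<And>a b. M $ a $ b = (if a = i \<and> b = i then c else 0)" "c \<noteq> 0"
  shows "rank M = 1"
proof -
  have "range (\<lambda>x. M *v x) \<subseteq> span {axis i 1}"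
  proof
    fix y assume "y \<in> range (\<lambda>x. M *v x)"
    then obtain x where "y = M *v x" by auto
    have d: "(\<Sum>j\<in>UNIV. (if j = i then c else 0) * x $ j) = c * x $ i"
      by (simp add: if_distrib[of "\<lambda>t. t * _"] cong: if_cong)
    then have "y = (c * x $ i) *\<^sub>R axis i 1"
      using \<open>y = M *v x\<close> by (auto simp: vec_eq_iff matrix_vector_mult_def assms axis_def d)
    then show "y \<in> span {axis i 1}" by (simp add: span_mul[OF span_base])
  qed
  then have "rank M \<le> 1"
    using dim_le_card[of _ "{axis i 1}"] rank_dim_range by (metis card.empty card_insert_disjoint empty_iff finite.emptyI finite.insertI One_nat_def)
  moreover have "M \<noteq> 0"
    using assms by (auto simp: vec_eq_iff)
  then have "rank M \<noteq> 0" by (simp add: rank_eq_0)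
  ultimately show ?thesis by simp
qed



lemma null_quad:
  fixes J :: "'a set" and c :: 'a and g h :: "('a \<Rightarrow> real) \<Rightarrow> real"
  assumes J: "finite J" "c \<notin> J"
    and gm: "g \<in> borel_measurable (Pi\<^sub>M (insert c J) (\<lambda>_. lborel))"
    and hm: "h \<in> borel_measurable (Pi\<^sub>M (insert c J) (\<lambda>_. lborel))"
    and gi: "\<And>\<theta> x. g (\<theta>(c:=x)) = g \<theta>" and hi: "\<And>\<theta> x. h (\<theta>(c:=x)) = h \<theta>"
  shows "{\<theta> \<in> space (Pi\<^sub>M (insert c J) (\<lambda>_. lborel)). g \<theta> \<noteq> 0 \<and> g \<theta> * (\<theta> c)\<^sup>2 + h \<theta> = 0}
           \<in> null_sets (Pi\<^sub>M (insert c J) (\<lambda>_. lborel))"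
    (is "?S \<in> null_sets ?M")
proof -
  interpret product_sigma_finite "\<lambda>_. lborel" by standard
  have cm: "(\<lambda>\<theta>. \<theta> c) \<in> borel_measurable ?M"
    using measurable_component_singleton[of c "insert c J" "\<lambda>_. lborel"] by simp
  have Sm: "?S \<in> sets ?M"
    using gm hm cm by measurable
  have inner: "(\<integral>\<^sup>+ y. indicator ?S (x(c := y)) \<partial>lborel) = 0" for x
  proof -
    let ?r = "sqrt (- h x / g x)"
    have le: "indicator ?S (x(c := y)) \<le> (indicator {?r, - ?r} y :: ennreal)" for y
    proof (cases "x(c := y) \<in> ?S")
      case True
      then have "g x \<noteq> 0" "g x * y\<^sup>2 + h x = 0"
        using gi hi by auto
      then have "y\<^sup>2 = - h x / g x" by (simp add: field_simps)
      then have "y = ?r \<or> y = - ?r"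
      proof -
        have "?r = \<bar>y\<bar>" using \<open>y\<^sup>2 = - h x / g x\<close> real_sqrt_abs[of y] by (simp only:)
        then show ?thesis by linarith
      qed
      then have "indicator {?r, - ?r} y = (1::ennreal)" by (auto simp: indicator_def)
      moreover have "indicator ?S (x(c := y)) = (1::ennreal)" using True by (simp only: indicator_simps)
      ultimately show ?thesis by simp
    next
      case False
      then show ?thesis by simp
    qed
    have "(\<integral>\<^sup>+ y. indicator ?S (x(c := y)) \<partial>lborel) \<le> (\<integral>\<^sup>+ y. indicator {?r, - ?r} y \<partial>lborel)"
      by (rule nn_integral_mono) (rule le)
    also have "\<dots> = emeasure lborel {?r, - ?r}"
      by simp
    also have "\<dots> = 0"
      by (rule emeasure_lborel_countable) simp
    finally show ?thesis by simp
  qed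
  have "emeasure ?M ?S = (\<integral>\<^sup>+ \<theta>. indicator ?S \<theta> \<partial>?M)"
    using Sm by simp
  also have "\<dots> = (\<integral>\<^sup>+ x. (\<integral>\<^sup>+ y. indicator ?S (x(c := y)) \<partial>lborel) \<partial>(Pi\<^sub>M J (\<lambda>_. lborel)))"
    by (rule product_nn_integral_insert) (use J Sm in auto)
  also have "\<dots> = 0" by (simp add: inner)
  finally show ?thesis using Sm by (simp add: null_sets_def)
qed



lemma mat_sub_ldistrib: "(A::real^'n^'m) ** (B - C) = A ** B - A ** (C::real^'p^'n)"
  by (simp add: vec_eq_iff matrix_matrix_mult_def sum_subtractf right_diff_distrib)

lemma mat_sub_rdistrib: "((B::real^'n^'m) - C) ** (A::real^'p^'n) = B ** A - C ** A"
  by (simp add: vec_eq_iff matrix_matrix_mult_def sum_subtractf left_diff_distrib)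

lemma Theta_diff:
  "Theta E tgt H \<theta> k - Theta E tgt H \<theta> l =
     transpose H ** (transpose (Bk E tgt \<theta> k) ** Bk E tgt \<theta> k - transpose (Bk E tgt \<theta> l) ** Bk E tgt \<theta> l) ** H"
  by (simp add: Theta_def mat_sub_ldistrib mat_sub_rdistrib matrix_mul_assoc)

lemma M_entry:
  "(transpose (Bk E tgt \<theta> k) ** Bk E tgt \<theta> k - transpose (Bk E tgt \<theta> l) ** Bk E tgt \<theta> l) $ a $ b =
     - B0 E \<theta> $ tgt k $ a * B0 E \<theta> $ tgt k $ b + (if a = tgt k \<and> b = tgt k then (\<theta> (Lam k))\<^sup>2 else 0)
     + B0 E \<theta> $ tgt l $ a * B0 E \<theta> $ tgt l $ b - (if a = tgt l \<and> b = tgt l then (\<theta> (Lam l))\<^sup>2 else 0)"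
  by (simp add: BkTBk_entry)

lemma null_quad':
  fixes I :: "'a set" and c :: 'a and g h :: "('a \<Rightarrow> real) \<Rightarrow> real"
  assumes "finite I" "c \<in> I"
    and "g \<in> borel_measurable (Pi\<^sub>M I (\<lambda>_. lborel))"
    and "h \<in> borel_measurable (Pi\<^sub>M I (\<lambda>_. lborel))"
    and "\<And>\<theta> x. g (\<theta>(c:=x)) = g \<theta>" and "\<And>\<theta> x. h (\<theta>(c:=x)) = h \<theta>"
  shows "{\<theta> \<in> space (Pi\<^sub>M I (\<lambda>_. lborel)). g \<theta> \<noteq> 0 \<and> g \<theta> * (\<theta> c)\<^sup>2 + h \<theta> = 0}
           \<in> null_sets (Pi\<^sub>M I (\<lambda>_. lborel))"
proof -
  have I: "I = insert c (I - {c})" using assms(2) by auto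
  show ?thesis
    using null_quad[of "I - {c}" c g h] assms I by simp
qed



theorem proposition9:
  fixes E :: "('d::{finite,linorder} \<times> 'd) set"
    and K :: nat
    and tgt :: "nat \<Rightarrow> 'd"
    and H :: "real^'p::{finite,linorder}^'d::{finite,linorder}"
  assumes edges_ordered: "\<forall>(j,i)\<in>E. i < j"
    and dims: "CARD('d) \<le> CARD('p)"
    and H_rank: "rank H = CARD('d)"
    and H_norm: "normalized_rows H"
  shows "\<exists>N \<in> null_sets (param_measure E K).
           \<forall>\<theta> \<in> space (param_measure E K). admissible E K \<theta> \<and> \<theta> \<notin> N \<longrightarrow>
             (\<forall>k\<in>{1..K}. \<forall>l\<in>{1..K}. k \<noteq> l \<longrightarrow>
                (rank (Theta E tgt H \<theta> k - Theta E tgt H \<theta> l) = 1 \<longleftrightarrow> tgt k = tgt l))"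
proof -
  define I where "I = param_index E K"
  let ?M = "Pi\<^sub>M I (\<lambda>_. lborel) :: ('d param \<Rightarrow> real) measure"
  have PI: "param_measure E K = ?M" by (simp add: param_measure_def I_def)
  have finI: "finite I"
    unfolding I_def param_index_def by (auto intro: finite_subset[of E UNIV])
  have LamI: "Lam k \<in> I" if "k \<in> {1..K}" for k
    using that by (simp add: I_def param_index_def)
  have comp: "(\<lambda>\<theta>. \<theta> p) \<in> borel_measurable ?M" if "p \<in> I" for p
    using measurable_component_singleton[of p I "\<lambda>_. lborel"] that by simp
  have mB0: "(\<lambda>\<theta>. B0 E \<theta> $ a $ b) \<in> borel_measurable ?M" for a b
  proof (cases "a = b")
    case True
    then show ?thesis using comp[of "Diag a"] by (simp add: B0_def I_def param_index_def)
  next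
    case False
    show ?thesis
    proof (cases "(b, a) \<in> E")
      case True
      then have "Edge a b \<in> I" by (force simp: I_def param_index_def)
      then show ?thesis using comp[of "Edge a b"] False True by (simp add: B0_def)
    next
      case F2: False
      then show ?thesis using False by (simp add: B0_def)
    qed
  qed
  have B0upd: "B0 E (\<theta>(Lam k := x)) = B0 E \<theta>" for \<theta> k x
    by (simp add: B0_def vec_eq_iff)
  define al where "al = (\<lambda>k l \<theta>. (B0 E \<theta> $ tgt l $ tgt k)\<^sup>2 - (B0 E \<theta> $ tgt k $ tgt k)\<^sup>2)"
  define be where "be = (\<lambda>k l \<theta>. (B0 E \<theta> $ tgt l $ tgt l)\<^sup>2 - (B0 E \<theta> $ tgt k $ tgt l)\<^sup>2)"
  define ga where "ga = (\<lambda>k l \<theta>. B0 E \<theta> $ tgt l $ tgt k * B0 E \<theta> $ tgt l $ tgt l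
                                   - B0 E \<theta> $ tgt k $ tgt k * B0 E \<theta> $ tgt k $ tgt l)"
  define C where "C = (\<lambda>k l \<theta>. be k l \<theta> - (\<theta> (Lam l))\<^sup>2)"
  define Nk where "Nk = (\<lambda>k l. if tgt k = tgt l then
      {\<theta> \<in> space ?M. (\<lambda>_. 1::real) \<theta> \<noteq> 0 \<and> (\<lambda>_. 1::real) \<theta> * (\<theta> (Lam k))\<^sup>2 + (\<lambda>\<theta>. - (\<theta> (Lam l))\<^sup>2) \<theta> = 0}
    else {\<theta> \<in> space ?M. (\<lambda>_. -1::real) \<theta> \<noteq> 0 \<and> (\<lambda>_. -1::real) \<theta> * (\<theta> (Lam l))\<^sup>2 + be k l \<theta> = 0}
       \<union> {\<theta> \<in> space ?M. C k l \<theta> \<noteq> 0 \<and> C k l \<theta> * (\<theta> (Lam k))\<^sup>2 + (\<lambda>\<theta>. al k l \<theta> * C k l \<theta> - (ga k l \<theta>)\<^sup>2) \<theta> = 0})"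
  have Nnull: "Nk k l \<in> null_sets ?M" if kl: "k \<in> {1..K}" "l \<in> {1..K}" "k \<noteq> l" for k l
  proof -
    have mk: "(\<lambda>\<theta>. \<theta> (Lam k)) \<in> borel_measurable ?M" and ml: "(\<lambda>\<theta>. \<theta> (Lam l)) \<in> borel_measurable ?M"
      using comp LamI kl by auto
    have mbe: "be k l \<in> borel_measurable ?M"
      unfolding be_def using mB0 by measurable
    have mal: "al k l \<in> borel_measurable ?M"
      unfolding al_def using mB0 by measurable
    have mga: "ga k l \<in> borel_measurable ?M"
      unfolding ga_def using mB0 by measurable
    have mC: "C k l \<in> borel_measurable ?M"
      unfolding C_def using mbe ml by measurable
    show ?thesis
    proof (cases "tgt k = tgt l")
      case True
      have "{\<theta> \<in> space ?M. (\<lambda>_. 1::real) \<theta> \<noteq> 0 \<and> (\<lambda>_. 1::real) \<theta> * (\<theta> (Lam k))\<^sup>2 + (\<lambda>\<theta>. - (\<theta> (Lam l))\<^sup>2) \<theta> = 0} \<in> null_sets ?M"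
        by (rule null_quad') (use finI LamI kl ml in auto)
      then show ?thesis using True by (simp add: Nk_def)
    next
      case False
      have "{\<theta> \<in> space ?M. (\<lambda>_. -1::real) \<theta> \<noteq> 0 \<and> (\<lambda>_. -1::real) \<theta> * (\<theta> (Lam l))\<^sup>2 + be k l \<theta> = 0} \<in> null_sets ?M"
        by (rule null_quad') (use finI LamI kl mbe in \<open>auto simp: be_def B0upd\<close>)
      moreover have "{\<theta> \<in> space ?M. C k l \<theta> \<noteq> 0 \<and> C k l \<theta> * (\<theta> (Lam k))\<^sup>2 + (\<lambda>\<theta>. al k l \<theta> * C k l \<theta> - (ga k l \<theta>)\<^sup>2) \<theta> = 0} \<in> null_sets ?M"
        by (rule null_quad') (use finI LamI kl mC mal mga in \<open>auto simp: C_def al_def be_def ga_def B0upd\<close>)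
      ultimately show ?thesis using False by (simp add: Nk_def null_sets.Un)
    qed
  qed
  define N where "N = (\<Union>k\<in>{1..K}. \<Union>l\<in>{1..K} - {k}. Nk k l)"
  have "N \<in> null_sets ?M"
    unfolding N_def using Nnull by (intro null_sets_UN') auto
  moreover have "rank (Theta E tgt H \<theta> k - Theta E tgt H \<theta> l) = 1 \<longleftrightarrow> tgt k = tgt l"
    if th: "\<theta> \<in> space ?M" "\<theta> \<notin> N" and kl: "k \<in> {1..K}" "l \<in> {1..K}" "k \<noteq> l" for \<theta> k l
  proof -
    let ?D = "transpose (Bk E tgt \<theta> k) ** Bk E tgt \<theta> k - transpose (Bk E tgt \<theta> l) ** Bk E tgt \<theta> l"
    have r: "rank (Theta E tgt H \<theta> k - Theta E tgt H \<theta> l) = rank ?D"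
      by (simp add: Theta_diff rank_sandwich[OF H_rank])
    have notN: "\<theta> \<notin> Nk k l" using th kl unfolding N_def by auto
    show ?thesis
    proof (cases "tgt k = tgt l")
      case True
      have ne: "(\<theta> (Lam k))\<^sup>2 - (\<theta> (Lam l))\<^sup>2 \<noteq> 0"
        using notN th True by (simp add: Nk_def)
      have "rank ?D = 1"
        by (rule rank_single[where i = "tgt k", OF _ ne]) (simp only: M_entry, simp add: True)
      then show ?thesis using r True by simp
    next
      case False
      have e1: "?D $ tgt k $ tgt k = (\<theta> (Lam k))\<^sup>2 + al k l \<theta>"
        using False unfolding M_entry by (simp add: al_def power2_eq_square)
      have e2: "?D $ tgt l $ tgt l = C k l \<theta>"
        using False unfolding M_entry by (simp add: C_def be_def power2_eq_square)
      have e3: "?D $ tgt k $ tgt l = ga k l \<theta>" "?D $ tgt l $ tgt k = ga k l \<theta>"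
        using False unfolding M_entry by (simp_all add: ga_def)
      have C0: "C k l \<theta> \<noteq> 0"
        using notN th False by (auto simp: Nk_def C_def)
      have D0: "C k l \<theta> * (\<theta> (Lam k))\<^sup>2 + (al k l \<theta> * C k l \<theta> - (ga k l \<theta>)\<^sup>2) \<noteq> 0"
        using notN th False C0 by (simp add: Nk_def)
      have "rank ?D \<noteq> 1"
      proof
        assume "rank ?D = 1"
        from rank1_minor[OF this, of "tgt k" "tgt k" "tgt l" "tgt l"]
        have "((\<theta> (Lam k))\<^sup>2 + al k l \<theta>) * C k l \<theta> - ga k l \<theta> * ga k l \<theta> = 0"
          by (simp only: e1 e2 e3)
        with D0 show False by (simp add: algebra_simps power2_eq_square)
      qed
      then show ?thesis using r False by simp
    qed
  qed
  ultimately show ?thesis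
    unfolding PI by blast
qed

end
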